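(* Let $p\ge2$ be an integer and let $A\in GL_n(\mathbb{C}(\{1/z\}))$ be such that the Mahler system $\phi_p(Y)=AY$ is Fuchsian at $\infty$. Then there exists a unique $F\in GL_n(\mathbb{C}[[1/z]])$ with $F(\infty)=I_n$ and $\phi_p(F)^{-1}AF=A(\infty)$. Moreover $F\in GL_n(\mathbb{C}\{1/z\})$, and if $A\in GL_n(\mathbb{C}(z))$ then $F\in GL_n(\mathcal{M}(\mathbb{P}^1(\mathbb{C})\setminus\overline{D}(0,1)))$.
   Context: $\phi_p$ acts entrywise by $f(z)\mapsto f(z^p)$. $\mathbb{C}\{1/z\}$ denotes power series in $1/z$ convergent near $\infty$ and $\mathbb{C}(\{1/z\})$ its fraction field. The system is Fuchsian at $\infty$ if $A$ is regular at $\infty$, i.e. $A(1/z)$ has entries analytic at $0$ and $A(\infty)\in GL_n(\mathbb{C})$. $\mathcal{M}(U)$ denotes meromorphic functions on $U$; $\overline{D}(0,1)$ is the closed unit disk. *)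

theory Defs
  imports "HOL-Analysis.Analysis" "HOL-Complex_Analysis.Complex_Analysis"
    "HOL-Computational_Algebra.Polynomial_FPS"
begin

abbreviation ent :: "'a^'n^'m \<Rightarrow> 'm \<Rightarrow> 'n \<Rightarrow> 'a" where
  "ent M i j \<equiv> vec_nth (vec_nth M i) j"

text \<open>Coordinate convention: w = 1/z.  A power series in 1/z is a complex fps in w.
  The Mahler operator phi_p : f(z) to f(z^p) becomes f(w) to f(w^p).\<close>

definition mahler_phi :: "nat \<Rightarrow> complex fps \<Rightarrow> complex fps" where
  "mahler_phi p f = f oo (fps_X ^ p)"

definition mat_phi :: "nat \<Rightarrow> complex fps ^'n^'m \<Rightarrow> complex fps ^'n^'m" where
  "mat_phi p M = (\<chi> i j. mahler_phi p (ent M i j))"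

definition mat_at_infty :: "complex fps ^'n^'m \<Rightarrow> complex ^'n^'m" where
  "mat_at_infty M = (\<chi> i j. fps_nth (ent M i j) 0)"

definition const_mat :: "complex ^'n^'m \<Rightarrow> complex fps ^'n^'m" where
  "const_mat C = (\<chi> i j. fps_const (ent C i j))"

definition convergent_fps :: "complex fps \<Rightarrow> bool" where
  "convergent_fps f \<longleftrightarrow> fps_conv_radius f > 0"

definition convergent_mat :: "complex fps ^'n^'m \<Rightarrow> bool" where
  "convergent_mat M \<longleftrightarrow> (\<forall>i j. convergent_fps (ent M i j))"

definition GL_convergent :: "complex fps ^'n^'n \<Rightarrow> bool" where
  "GL_convergent M \<longleftrightarrow> convergent_mat M \<and>
     (\<exists>G. convergent_mat G \<and> M ** G = mat 1 \<and> G ** M = mat 1)"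

text \<open>A matrix A in GL_n(C({1/z})) which is regular at infinity: entries analytic at
  infinity (convergent power series in 1/z), nonzero determinant, and A(infinity) invertible.\<close>
definition fuchsian_at_infty :: "complex fps ^'n^'n \<Rightarrow> bool" where
  "fuchsian_at_infty A \<longleftrightarrow> convergent_mat A \<and> det A \<noteq> 0 \<and> invertible (mat_at_infty A)"

text \<open>Expansion at infinity of a rational function of z regular at infinity,
  i.e. a rational function of w = 1/z regular at w = 0.\<close>
definition rational_fps :: "complex fps \<Rightarrow> bool" where
  "rational_fps f \<longleftrightarrow> (\<exists>P Q :: complex poly. poly Q 0 \<noteq> 0 \<and> f = fps_of_poly P / fps_of_poly Q)"

definition rational_mat :: "complex fps ^'n^'m \<Rightarrow> bool" where
  "rational_mat M \<longleftrightarrow> (\<forall>i j. rational_fps (ent M i j))"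

text \<open>A power series f in w extends to a meromorphic function on P^1(C) minus the closed unit
  disk in z, i.e. on the open unit disk |w| < 1 in w.\<close>
definition meromorphic_ext :: "complex fps \<Rightarrow> (complex \<Rightarrow> complex) \<Rightarrow> bool" where
  "meromorphic_ext f g \<longleftrightarrow> g meromorphic_on ball 0 1 \<and>
     (\<forall>\<^sub>F w in at 0. g w = eval_fps f w)"

definition GL_meromorphic :: "complex fps ^'n^'n \<Rightarrow> bool" where
  "GL_meromorphic M \<longleftrightarrow>
     (\<exists>Fm :: (complex \<Rightarrow> complex)^'n^'n. \<exists>Gm :: (complex \<Rightarrow> complex)^'n^'n.
        (\<forall>i j. meromorphic_ext (ent M i j) (ent Fm i j)) \<and>
        (\<forall>i j. ent Gm i j meromorphic_on ball 0 1) \<and>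
        (\<forall>\<^sub>F w in at 0. (\<chi> i j. ent Fm i j w) ** (\<chi> i j. ent Gm i j w) = mat 1))"

end

theory Submission
  imports Defs
begin


definition cm :: "complex fps ^'n^'m \<Rightarrow> nat \<Rightarrow> complex^'n^'m" where
  "cm M k = (\<chi> i j. fps_nth (ent M i j) k)"

definition mkm :: "(nat \<Rightarrow> complex^'n^'m) \<Rightarrow> complex fps^'n^'m" where
  "mkm c = (\<chi> i j. Abs_fps (\<lambda>k. c k $ i $ j))"

lemma cm_mkm [simp]: "cm (mkm c) = c"
  by (auto simp: cm_def mkm_def vec_eq_iff fun_eq_iff)

lemma cm_eq_iff: "M = N \<longleftrightarrow> (\<forall>k. cm M k = cm N k)"
  by (auto simp: cm_def vec_eq_iff fps_eq_iff)

lemma mkm_cm [simp]: "mkm (cm M) = M"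
  by (simp add: cm_eq_iff)

lemma cm_mult: "cm (M ** N) m = (\<Sum>k\<le>m. cm M k ** cm N (m - k))"
  by (simp add: cm_def matrix_matrix_mult_def vec_eq_iff fps_sum_nth fps_mult_nth sum_component
        atLeast0AtMost) (intro allI sum.swap)

lemma cm_mat1: "cm (mat 1) k = (if k = 0 then mat 1 else 0)"
  by (auto simp: cm_def mat_def vec_eq_iff)

lemma cm_const: "cm (const_mat C) k = (if k = 0 then C else 0)"
  by (auto simp: cm_def const_mat_def vec_eq_iff)

lemma mat_at_infty_cm: "mat_at_infty M = cm M 0"
  by (simp add: mat_at_infty_def cm_def)

lemma compose_Xp_nth:
  assumes "p \<ge> 1"
  shows "(f oo fps_X ^ p) $ m = (if p dvd m then f $ (m div p) else (0::complex))"
proof -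
  have pw: "\<And>i. ((fps_X::complex fps)^p)^i = fps_X^(p*i)" by (simp add: power_mult)
  have "(f oo fps_X ^ p) $ m = (\<Sum>i=0..m. f$i * (if m = p * i then 1 else 0))"
    unfolding fps_compose_nth pw by (simp add: fps_X_power_iff)
  also have "\<dots> = (\<Sum>i=0..m. if i = m div p \<and> p dvd m then f$i else 0)"
    using assms by (intro sum.cong refl) auto
  also have "\<dots> = (if p dvd m then f $ (m div p) else 0)"
    using assms by (auto simp: sum.delta' div_le_dividend)
  finally show ?thesis .
qed

lemma cm_phi:
  assumes "p \<ge> 1"
  shows "cm (mat_phi p M) m = (if p dvd m then cm M (m div p) else 0)"
  using assms by (auto simp: cm_def mat_phi_def mahler_phi_def compose_Xp_nth vec_eq_iff)

lemma phi_mult: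
  assumes "p \<ge> 1"
  shows "mat_phi p (M ** N) = mat_phi p M ** mat_phi p N"
  using assms by (simp add: mat_phi_def mahler_phi_def matrix_matrix_mult_def
      fps_compose_sum_distrib fps_compose_mult_distrib vec_eq_iff)

lemma phi_one: "mat_phi p (mat 1) = mat 1"
  by (auto simp: mat_phi_def mahler_phi_def mat_def vec_eq_iff)

lemma inv_props:
  assumes "invertible X"
  shows "X ** matrix_inv X = mat 1 \<and> matrix_inv X ** X = mat 1"
  using assms unfolding invertible_def matrix_inv_def by (rule someI_ex)

function rinv :: "(nat \<Rightarrow> complex^'n^'n) \<Rightarrow> nat \<Rightarrow> complex^'n^'n" where
  "rinv c m = (if m = 0 then mat 1 else - (\<Sum>k\<in>{1..m}. c k ** rinv c (m - k)))"
  by auto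
termination by (relation "Wellfounded.measure (\<lambda>(c,m). m)") auto

declare rinv.simps [simp del]

lemma atMost_split0: "{..m::nat} = insert 0 {1..m}" by auto

lemma rinv_eq:
  assumes "c 0 = mat 1"
  shows "(\<Sum>k\<le>m. c k ** rinv c (m-k)) = (if m = 0 then mat 1 else 0)"
proof (cases "m = 0")
  case True thus ?thesis using assms by (simp add: rinv.simps)
next
  case False
  have "(\<Sum>k\<le>m. c k ** rinv c (m-k)) = c 0 ** rinv c m + (\<Sum>k\<in>{1..m}. c k ** rinv c (m-k))"
    unfolding atMost_split0 by (subst sum.insert) auto
  also have "rinv c m = - (\<Sum>k\<in>{1..m}. c k ** rinv c (m - k))"
    using False by (subst rinv.simps) simp
  also have "c 0 ** (- (\<Sum>k\<in>{1..m}. c k ** rinv c (m - k))) + (\<Sum>k\<in>{1..m}. c k ** rinv c (m-k)) = 0"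
    using assms by simp
  finally show ?thesis using False by simp
qed

lemma right_inv:
  assumes "cm M 0 = mat 1"
  shows "M ** mkm (rinv (cm M)) = mat 1"
  unfolding cm_eq_iff cm_mult cm_mkm cm_mat1 using rinv_eq[of "cm M", OF assms] by simp

lemma inv_of_I0:
  assumes "cm M 0 = mat 1"
  shows "M ** mkm (rinv (cm M)) = mat 1 \<and> mkm (rinv (cm M)) ** M = mat 1"
proof -
  define H where "H = mkm (rinv (cm M))"
  have H0: "cm H 0 = mat 1" by (simp add: H_def rinv.simps)
  define K where "K = mkm (rinv (cm H))"
  have MH: "M ** H = mat 1" using right_inv[OF assms] by (simp add: H_def)
  have HK: "H ** K = mat 1" using right_inv[OF H0] by (simp add: K_def)
  have "M = M ** (H ** K)" by (simp add: HK)
  also have "\<dots> = K" by (simp add: matrix_mul_assoc MH)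
  finally show ?thesis using MH HK by (simp add: H_def)
qed

lemma invertible_I0:
  assumes "cm M 0 = mat 1"
  shows "invertible M"
  using inv_of_I0[OF assms] unfolding invertible_def by blast



definition mnorm :: "complex^'n^'m \<Rightarrow> real" where
  "mnorm M = (\<Sum>i\<in>UNIV. \<Sum>j\<in>UNIV. norm (M$i$j))"

lemma mnorm_nonneg [simp]: "0 \<le> mnorm M"
  by (simp add: mnorm_def sum_nonneg)

lemma mnorm_zero [simp]: "mnorm 0 = 0"
  by (simp add: mnorm_def)

lemma mnorm_entry: "norm (M$i$j) \<le> mnorm M"
proof -
  have "norm (M$i$j) \<le> (\<Sum>j\<in>UNIV. norm (M$i$j))"
    by (rule member_le_sum) auto
  also have "\<dots> \<le> mnorm M" unfolding mnorm_def
    by (rule member_le_sum[where f="\<lambda>i. \<Sum>j\<in>UNIV. norm (M$i$j)"]) (auto intro: sum_nonneg)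
  finally show ?thesis .
qed

lemma mnorm_row: "(\<Sum>j\<in>UNIV. norm (M$i$j)) \<le> mnorm M"
  unfolding mnorm_def
  by (rule member_le_sum[where f="\<lambda>i. \<Sum>j\<in>UNIV. norm (M$i$j)"]) (auto intro: sum_nonneg)

lemma mnorm_add: "mnorm (M + N) \<le> mnorm M + mnorm N"
  unfolding mnorm_def sum.distrib[symmetric]
  by (intro sum_mono) (simp add: norm_triangle_ineq)

lemma mnorm_diff: "mnorm (M - N) \<le> mnorm M + mnorm N"
  unfolding mnorm_def sum.distrib[symmetric]
  by (intro sum_mono) (simp add: norm_triangle_ineq4)

lemma mnorm_uminus [simp]: "mnorm (- M) = mnorm M"
  by (simp add: mnorm_def)

lemma mnorm_sum: "mnorm (\<Sum>k\<in>S. f k) \<le> (\<Sum>k\<in>S. mnorm (f k))"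
proof (induction S rule: infinite_finite_induct)
  case (insert x F)
  then show ?case using mnorm_add[of "f x" "sum f F"] by simp
qed auto

lemma mnorm_mult: "mnorm (M ** N) \<le> mnorm M * mnorm N"
proof -
  have "mnorm (M ** N) \<le> (\<Sum>i\<in>UNIV. \<Sum>j\<in>UNIV. \<Sum>k\<in>UNIV. norm (M$i$k) * norm (N$k$j))"
    unfolding mnorm_def matrix_matrix_mult_def
    by (intro sum_mono) (auto intro!: order.trans[OF norm_sum] simp: norm_mult)
  also have "\<dots> = (\<Sum>i\<in>UNIV. \<Sum>k\<in>UNIV. norm (M$i$k) * (\<Sum>j\<in>UNIV. norm (N$k$j)))"
    by (simp add: sum_distrib_left) (intro sum.cong refl sum.swap)
  also have "\<dots> \<le> (\<Sum>i\<in>UNIV. \<Sum>k\<in>UNIV. norm (M$i$k) * mnorm N)"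
    by (intro sum_mono mult_left_mono mnorm_row) auto
  also have "\<dots> = mnorm M * mnorm N"
    by (simp add: mnorm_def sum_distrib_right)
  finally show ?thesis .
qed

lemma geom_small:
  fixes x :: real
  assumes "0 \<le> x" "x \<le> 1/2"
  shows "(\<Sum>k\<in>{1..m}. x^k) \<le> 2 * x"
proof (induction m)
  case (Suc m)
  have "(\<Sum>k\<in>{1..Suc m}. x^k) = x + x * (\<Sum>k\<in>{1..m}. x^k)"
  proof -
    have "(\<Sum>k\<in>{1..Suc m}. x^k) = (\<Sum>k\<in>{0..m}. x^Suc k)"
      using sum.shift_bounds_cl_Suc_ivl[of "\<lambda>k. x^k" 0 m] by (simp add: numeral_One)
    also have "\<dots> = x * (\<Sum>k\<in>{0..m}. x^k)" by (simp add: sum_distrib_left)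
    also have "{0..m} = insert 0 {1..m}" by auto
    finally show ?thesis by (simp add: algebra_simps)
  qed
  also have "\<dots> \<le> x + x * (2 * x)" using Suc assms by (intro add_left_mono mult_left_mono) auto
  also have "\<dots> \<le> 2 * x"
  proof -
    have "x * (2*x) \<le> x * 1" using assms by (intro mult_left_mono) auto
    thus ?thesis by simp
  qed
  finally show ?case .
qed (use assms in auto)

lemma bound_lemma:
  fixes b :: "nat \<Rightarrow> real"
  assumes b0: "\<And>m. 0 \<le> b m" and a: "0 \<le> a" and d: "0 \<le> d" and R: "0 \<le> R" and p: "p \<ge> 2"
    and rec: "\<And>m. m \<ge> 1 \<Longrightarrow> b m \<le> a * (\<Sum>k\<in>{1..m}. R^k * b (m - k)) + d * b (m div p)"
  shows "\<exists>M\<ge>1. \<forall>m. b m \<le> b 0 * M^m"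
proof -
  define R' where "R' = R + 1"
  define M where "M = max (max 1 (2*R')) (max (4*a*R') (2*d))"
  have R'1: "R' \<ge> 1" using R by (simp add: R'_def)
  have M1: "M \<ge> 1" and M2: "M \<ge> 2 * R'" and M3: "M \<ge> 4*a*R'" and M4: "M \<ge> 2 * d"
    by (auto simp: M_def)
  have Mpos: "M > 0" using M1 by simp
  define x where "x = R' / M"
  have x0: "0 \<le> x" and x1: "x \<le> 1/2" using M2 R'1 Mpos by (auto simp: x_def field_simps)
  have "b m \<le> b 0 * M^m" for m
  proof (induction m rule: less_induct)
    case (less m)
    show ?case
    proof (cases "m = 0")
      case True thus ?thesis by simp
    next
      case False
      hence m1: "m \<ge> 1" by simp
      have "b m \<le> a * (\<Sum>k\<in>{1..m}. R^k * b (m - k)) + d * b (m div p)" using rec[OF m1] .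
      also have "\<dots> \<le> a * (\<Sum>k\<in>{1..m}. R'^k * (b 0 * M^(m - k))) + d * (b 0 * M^(m div p))"
      proof (intro add_mono mult_left_mono sum_mono a d)
        fix k assume k: "k \<in> {1..m}"
        show "R^k * b (m - k) \<le> R'^k * (b 0 * M^(m - k))"
          using less.IH[of "m - k"] k R b0 by (intro mult_mono power_mono) (auto simp: R'_def)
      next
        show "b (m div p) \<le> b 0 * M^(m div p)" using less.IH[of "m div p"] m1 p by simp
      qed
      also have "(\<Sum>k\<in>{1..m}. R'^k * (b 0 * M^(m - k))) = b 0 * M^m * (\<Sum>k\<in>{1..m}. x^k)"
      proof -
        have "R'^k * (b 0 * M^(m - k)) = b 0 * M^m * x^k" if "k \<in> {1..m}" for k
        proof -
          have "M^m = M^k * M^(m-k)" using that by (simp add: power_add[symmetric])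
          thus ?thesis using Mpos by (simp add: x_def power_divide field_simps)
        qed
        hence "(\<Sum>k\<in>{1..m}. R'^k * (b 0 * M^(m - k))) = (\<Sum>k\<in>{1..m}. b 0 * M^m * x^k)"
          by (intro sum.cong) auto
        thus ?thesis by (simp add: sum_distrib_left)
      qed
      also have "a * (b 0 * M^m * (\<Sum>k\<in>{1..m}. x^k)) \<le> a * (b 0 * M^m * (2*x))"
        using geom_small[OF x0 x1, of m] a b0[of 0] Mpos
        by (intro mult_left_mono) auto
      also have "a * (b 0 * M^m * (2*x)) \<le> b 0 * M^m / 2"
      proof -
        have h: "a * (2 * x) \<le> 1/2" using M3 Mpos R'1 by (simp add: x_def field_simps)
        have t: "0 \<le> b 0 * M^m" using b0[of 0] Mpos by simp
        have "a * (b 0 * M^m * (2*x)) = (b 0 * M^m) * (a * (2*x))" by (simp add: mult_ac)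
        also have "\<dots> \<le> (b 0 * M^m) * (1/2)" by (rule mult_left_mono[OF h t])
        finally show ?thesis by simp
      qed
      also have "d * (b 0 * M^(m div p)) \<le> b 0 * M^m / 2"
      proof -
        have "m div p < m" using m1 p by (intro div_less_dividend) auto
        hence "m div p + 1 \<le> m" by simp
        hence "M^(m div p + 1) \<le> M^m" using M1 by (intro power_increasing) auto
        hence "M^(m div p) * M \<le> M^m" by (simp add: mult.commute)
        moreover have "d * M^(m div p) \<le> M^(m div p) * M / 2" using M4 Mpos
          by (simp add: field_simps)
        ultimately have "d * M^(m div p) \<le> M^m / 2" by linarith
        hence "b 0 * (d * M^(m div p)) \<le> b 0 * (M^m / 2)" using b0[of 0] by (rule mult_left_mono)
        thus ?thesis by (simp add: mult_ac)
      qed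
      finally show ?thesis by simp
    qed
  qed
  thus ?thesis using M1 by blast
qed



lemma conv_bound:
  assumes "fps_conv_radius (f::complex fps) > 0"
  shows "\<exists>C R. 0 \<le> C \<and> 0 \<le> R \<and> (\<forall>k. norm (fps_nth f k) \<le> C * R^k)"
proof -
  obtain r :: real where r: "0 < ereal r" "ereal r < fps_conv_radius f"
    using ereal_dense2[OF assms] by blast
  have r0: "r > 0" using r by simp
  have "summable (\<lambda>n. norm (fps_nth f n * of_real r ^ n))"
    using r r0 by (intro abs_summable_in_conv_radius) (simp add: fps_conv_radius_def)
  hence "(\<lambda>n. norm (fps_nth f n * of_real r ^ n)) \<longlonglongrightarrow> 0"
    by (rule summable_LIMSEQ_zero)
  hence "Bseq (\<lambda>n. norm (fps_nth f n * of_real r ^ n))" by (rule convergent_imp_Bseq[OF convergentI])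
  then obtain K where K: "K > 0" "\<And>n. norm (norm (fps_nth f n * of_real r ^ n)) \<le> K"
    by (auto simp: Bseq_def)
  have "norm (fps_nth f k) \<le> K * (1/r)^k" for k
  proof -
    have "norm (fps_nth f k) * r^k \<le> K" using K(2)[of k] r0 by (simp add: norm_mult norm_power)
    thus ?thesis using r0 by (simp add: field_simps power_divide)
  qed
  thus ?thesis using K r0 by (intro exI[of _ K] exI[of _ "1/r"]) auto
qed

lemma mat_conv_bound:
  assumes "convergent_mat M"
  shows "\<exists>C R. 0 \<le> C \<and> 0 \<le> R \<and> (\<forall>k. mnorm (cm M k) \<le> C * R^k)"
proof -
  have "\<forall>i j. \<exists>C R. 0 \<le> C \<and> 0 \<le> R \<and> (\<forall>k. norm (fps_nth (ent M i j) k) \<le> C * R^k)"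
    using assms conv_bound by (simp add: convergent_mat_def convergent_fps_def)
  then obtain C R where CR: "\<And>i j. 0 \<le> C i j \<and> 0 \<le> R i j \<and> (\<forall>k. norm (fps_nth (ent M i j) k) \<le> C i j * R i j ^ k)"
    by metis
  define Rt where "Rt = (\<Sum>i\<in>UNIV. \<Sum>j\<in>UNIV. R i j)"
  define Ct where "Ct = (\<Sum>i\<in>UNIV. \<Sum>j\<in>UNIV. C i j)"
  have Rle: "R i j \<le> Rt" for i j
  proof -
    have "R i j \<le> (\<Sum>j\<in>UNIV. R i j)" by (rule member_le_sum) (use CR in auto)
    also have "\<dots> \<le> Rt" unfolding Rt_def
      by (rule member_le_sum[where f="\<lambda>i. \<Sum>j\<in>UNIV. R i j"]) (auto intro: sum_nonneg simp: CR)
    finally show ?thesis .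
  qed
  have "mnorm (cm M k) \<le> Ct * Rt^k" for k
  proof -
    have "mnorm (cm M k) \<le> (\<Sum>i\<in>UNIV. \<Sum>j\<in>UNIV. C i j * Rt^k)"
      unfolding mnorm_def cm_def
    proof (intro sum_mono, simp)
      fix i j
      have "norm (fps_nth (ent M i j) k) \<le> C i j * R i j ^ k" using CR by blast
      also have "\<dots> \<le> C i j * Rt ^ k" using CR Rle by (intro mult_left_mono power_mono) auto
      finally show "norm (fps_nth (ent M i j) k) \<le> C i j * Rt ^ k" .
    qed
    thus ?thesis by (simp add: Ct_def sum_distrib_right)
  qed
  moreover have "0 \<le> Ct" "0 \<le> Rt" using CR by (auto simp: Ct_def Rt_def intro!: sum_nonneg)
  ultimately show ?thesis by blast
qed

lemma bound_conv:
  assumes K: "0 \<le> K" and B: "B \<ge> 1" and bd: "\<And>k. mnorm (cm M k) \<le> K * B^k"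
  shows "fps_conv_radius (ent M i j) \<ge> ereal (1/(2*B))"
proof -
  define f where "f = ent M i j"
  define z :: complex where "z = of_real (1/(2*B))"
  have Bpos: "B > 0" using B by simp
  have nz: "norm z = 1/(2*B)" unfolding z_def norm_of_real using Bpos by simp
  have "summable (\<lambda>n. fps_nth f n * z^n)"
  proof (rule summable_comparison_test)
    show "summable (\<lambda>n. K * (1/2)^n)" by (intro summable_mult summable_geometric) auto
    show "\<exists>N. \<forall>n\<ge>N. norm (fps_nth f n * z ^ n) \<le> K * (1/2)^n"
    proof (intro exI allI impI)
      fix n :: nat
      have "norm (fps_nth f n) \<le> K * B^n"
        using mnorm_entry[of "cm M n" i j] bd[of n] by (simp add: cm_def f_def)
      hence "norm (fps_nth f n) * (1/(2*B))^n \<le> K * B^n * (1/(2*B))^n"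
        using Bpos by (intro mult_right_mono) auto
      also have "\<dots> = K * (1/2)^n" using Bpos by (simp add: power_divide field_simps power_mult_distrib)
      moreover note nz
      ultimately show "norm (fps_nth f n * z ^ n) \<le> K * (1/2)^n"
        by (simp add: norm_mult norm_power)
    qed
  qed
  hence "conv_radius (fps_nth f) \<ge> norm z" by (rule conv_radius_geI)
  thus ?thesis unfolding nz by (simp add: fps_conv_radius_def f_def)
qed

lemma bound_convergent:
  assumes K: "0 \<le> K" and B: "B \<ge> 1" and bd: "\<And>k. mnorm (cm M k) \<le> K * B^k"
  shows "convergent_mat M"
  unfolding convergent_mat_def convergent_fps_def
proof (intro allI)
  fix i j
  have "ereal 0 < ereal (1/(2*B))" using B by simp
  also have "\<dots> \<le> fps_conv_radius (ent M i j)" by (rule bound_conv[OF K B bd])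
  finally show "0 < fps_conv_radius (ent M i j)" by (simp add: zero_ereal_def)
qed

function fsol :: "complex^'n^'n \<Rightarrow> (nat \<Rightarrow> complex^'n^'n) \<Rightarrow> complex^'n^'n \<Rightarrow> nat \<Rightarrow> nat \<Rightarrow> complex^'n^'n" where
  "fsol Bi a B p m = (if m = 0 then mat 1 else Bi ** ((if p dvd m \<and> 1 < p then fsol Bi a B p (m div p) ** B else 0)
       - (\<Sum>k\<in>{1..m}. a k ** fsol Bi a B p (m - k))))"
  by auto
termination by (relation "Wellfounded.measure (\<lambda>(Bi,a,B,p,m). m)") auto

declare fsol.simps [simp del]

definition eqn :: "(nat \<Rightarrow> complex^'n^'n) \<Rightarrow> complex^'n^'n \<Rightarrow> nat \<Rightarrow> (nat \<Rightarrow> complex^'n^'n) \<Rightarrow> bool" where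
  "eqn a B p c \<longleftrightarrow> (\<forall>m. (\<Sum>k\<le>m. a k ** c (m-k)) = (if p dvd m then c (m div p) ** B else 0))"

lemma sum_split0: "(\<Sum>k\<le>m. f k) = f 0 + (\<Sum>k\<in>{1..m}. f k)"
  for f :: "nat \<Rightarrow> 'a::comm_monoid_add"
  unfolding atMost_split0 by (subst sum.insert) auto

lemma solve_left:
  fixes B Bi X S R :: "complex^'n^'n"
  assumes "Bi ** B = mat 1" "B ** X + S = R"
  shows "X = Bi ** (R - S)"
proof -
  have "R - S = B ** X + S - S" using assms(2) by simp
  hence "B ** X = R - S" by simp
  hence "Bi ** (B ** X) = Bi ** (R - S)" by simp
  thus ?thesis by (simp add: matrix_mul_assoc assms(1))
qed

lemma eqn_fsol:
  assumes p: "p \<ge> 2" and a0: "a 0 = B" and BB: "Bi ** B = mat 1" "B ** Bi = mat 1"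
  shows "(c 0 = mat 1 \<and> eqn a B p c) \<longleftrightarrow> c = fsol Bi a B p"
proof
  assume H: "c 0 = mat 1 \<and> eqn a B p c"
  have "c m = fsol Bi a B p m" for m
  proof (induction m rule: less_induct)
    case (less m)
    show ?case
    proof (cases "m = 0")
      case True thus ?thesis using H by (simp add: fsol.simps)
    next
      case False
      define R where "R = (if p dvd m then c (m div p) ** B else 0)"
      define S where "S = (\<Sum>k\<in>{1..m}. a k ** c (m - k))"
      have "(\<Sum>k\<le>m. a k ** c (m-k)) = R" using H unfolding eqn_def R_def by blast
      hence "B ** c m + S = R" unfolding sum_split0 S_def using a0 by simp
      hence cm: "c m = Bi ** (R - S)" by (rule solve_left[OF BB(1)])
      have R': "R = (if p dvd m \<and> 1 < p then fsol Bi a B p (m div p) ** B else 0)"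
        using less.IH[of "m div p"] False p by (auto simp: R_def)
      have S': "S = (\<Sum>k\<in>{1..m}. a k ** fsol Bi a B p (m - k))"
        unfolding S_def using less.IH False by (intro sum.cong) auto
      show ?thesis unfolding cm R' S' using False by (subst (2) fsol.simps) simp
    qed
  qed
  thus "c = fsol Bi a B p" by blast
next
  assume c: "c = fsol Bi a B p"
  have c0: "c 0 = mat 1" by (simp add: c fsol.simps)
  have "(\<Sum>k\<le>m. a k ** c (m-k)) = (if p dvd m then c (m div p) ** B else 0)" for m
  proof (cases "m = 0")
    case True thus ?thesis using c0 a0 by simp
  next
    case False
    define R where "R = (if p dvd m then c (m div p) ** B else 0)"
    define S where "S = (\<Sum>k\<in>{1..m}. a k ** c (m - k))"
    have "c m = Bi ** (R - S)" unfolding c R_def S_def using False p by (subst fsol.simps) simp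
    hence "B ** c m = R - S" by (simp add: matrix_mul_assoc BB(2))
    hence "(\<Sum>k\<le>m. a k ** c (m-k)) = R" unfolding sum_split0 S_def[symmetric] using a0 by simp
    thus ?thesis by (simp add: R_def)
  qed
  thus "c 0 = mat 1 \<and> eqn a B p c" using c0 by (simp add: eqn_def)
qed

lemma equation_iff:
  assumes p: "p \<ge> 2" and F0: "cm F 0 = mat 1"
  shows "matrix_inv (mat_phi p F) ** A ** F = const_mat A0 \<longleftrightarrow> eqn (cm A) A0 p (cm F)"
proof -
  define X where "X = mat_phi p F"
  have X0: "cm X 0 = mat 1" using F0 p by (simp add: cm_phi X_def)
  hence inv: "X ** matrix_inv X = mat 1" "matrix_inv X ** X = mat 1"
    using inv_props invertible_I0 by blast+
  have "matrix_inv X ** A ** F = const_mat A0 \<longleftrightarrow> A ** F = X ** const_mat A0"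
  proof
    assume h: "matrix_inv X ** A ** F = const_mat A0"
    have "X ** (matrix_inv X ** A ** F) = (X ** matrix_inv X) ** A ** F" by (simp add: matrix_mul_assoc)
    also have "\<dots> = A ** F" using inv by simp
    finally show "A ** F = X ** const_mat A0" using h by simp
  next
    assume h: "A ** F = X ** const_mat A0"
    have "matrix_inv X ** A ** F = matrix_inv X ** (A ** F)" by (simp add: matrix_mul_assoc)
    also have "\<dots> = (matrix_inv X ** X) ** const_mat A0" using h by (simp add: matrix_mul_assoc)
    finally show "matrix_inv X ** A ** F = const_mat A0" using inv by simp
  qed
  also have "A ** F = X ** const_mat A0 \<longleftrightarrow> eqn (cm A) A0 p (cm F)"
  proof -
    have "cm (X ** const_mat A0) m = (if p dvd m then cm F (m div p) ** A0 else 0)" for m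
    proof -
      have "cm (X ** const_mat A0) m = (\<Sum>k\<le>m. cm X k ** (if m - k = 0 then A0 else 0))"
        by (simp add: cm_mult cm_const)
      also have "\<dots> = (\<Sum>k\<le>m. if k = m then cm X k ** A0 else 0)" by (intro sum.cong) auto
      also have "\<dots> = cm X m ** A0" by simp
      finally show ?thesis using p by (simp add: cm_phi X_def)
    qed
    thus ?thesis unfolding cm_eq_iff eqn_def cm_mult by simp
  qed
  finally show ?thesis unfolding X_def .
qed



lemma A0_inv:
  assumes "fuchsian_at_infty A"
  shows "matrix_inv (cm A 0) ** cm A 0 = mat 1 \<and> cm A 0 ** matrix_inv (cm A 0) = mat 1"
  using assms inv_props[of "cm A 0"] by (auto simp: fuchsian_at_infty_def mat_at_infty_cm)

lemma sol_char:
  assumes p: "p \<ge> 2" and fu: "fuchsian_at_infty A"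
  shows "(invertible F \<and> mat_at_infty F = mat 1 \<and>
            matrix_inv (mat_phi p F) ** A ** F = const_mat (mat_at_infty A))
         \<longleftrightarrow> cm F = fsol (matrix_inv (cm A 0)) (cm A) (cm A 0) p"
proof
  assume H: "invertible F \<and> mat_at_infty F = mat 1 \<and>
            matrix_inv (mat_phi p F) ** A ** F = const_mat (mat_at_infty A)"
  hence F0: "cm F 0 = mat 1" by (simp add: mat_at_infty_cm)
  hence "eqn (cm A) (cm A 0) p (cm F)" using H equation_iff[OF p F0] by (simp add: mat_at_infty_cm)
  thus "cm F = fsol (matrix_inv (cm A 0)) (cm A) (cm A 0) p"
    using eqn_fsol[OF p refl, of "matrix_inv (cm A 0)"] A0_inv[OF fu] F0 by blast
next
  assume c: "cm F = fsol (matrix_inv (cm A 0)) (cm A) (cm A 0) p"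
  have "cm F 0 = mat 1 \<and> eqn (cm A) (cm A 0) p (cm F)"
    using eqn_fsol[OF p refl, of "matrix_inv (cm A 0)"] A0_inv[OF fu] c by blast
  thus "invertible F \<and> mat_at_infty F = mat 1 \<and>
            matrix_inv (mat_phi p F) ** A ** F = const_mat (mat_at_infty A)"
    using invertible_I0 equation_iff[OF p] by (auto simp: mat_at_infty_cm)
qed

lemma formal_part:
  assumes p: "p \<ge> 2" and fu: "fuchsian_at_infty A"
  shows "\<exists>!F :: complex fps ^'n^'n. invertible F \<and> mat_at_infty F = mat 1 \<and>
            matrix_inv (mat_phi p F) ** A ** F = const_mat (mat_at_infty A)"
proof (rule ex1I[of _ "mkm (fsol (matrix_inv (cm A 0)) (cm A) (cm A 0) p)"])
  show "invertible (mkm (fsol (matrix_inv (cm A 0)) (cm A) (cm A 0) p)) \<and>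
    mat_at_infty (mkm (fsol (matrix_inv (cm A 0)) (cm A) (cm A 0) p)) = mat 1 \<and>
    matrix_inv (mat_phi p (mkm (fsol (matrix_inv (cm A 0)) (cm A) (cm A 0) p))) ** A **
    mkm (fsol (matrix_inv (cm A 0)) (cm A) (cm A 0) p) = const_mat (mat_at_infty A)"
    using sol_char[OF p fu] by simp
next
  fix F :: "complex fps ^'n^'n"
  assume "invertible F \<and> mat_at_infty F = mat 1 \<and>
            matrix_inv (mat_phi p F) ** A ** F = const_mat (mat_at_infty A)"
  hence "cm F = fsol (matrix_inv (cm A 0)) (cm A) (cm A 0) p" using sol_char[OF p fu] by blast
  thus "F = mkm (fsol (matrix_inv (cm A 0)) (cm A) (cm A 0) p)" by (metis mkm_cm)
qed

lemma sol_bound: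
  assumes p: "p \<ge> 2" and fu: "fuchsian_at_infty A"
    and c: "c = fsol (matrix_inv (cm A 0)) (cm A) (cm A 0) p"
  shows "\<exists>M\<ge>1. \<forall>m. mnorm (c m) \<le> mnorm (c 0) * M^m"
proof -
  define Bi where "Bi = matrix_inv (cm A 0)"
  define B where "B = cm A 0"
  obtain C R where CR: "0 \<le> C" "0 \<le> R" "\<And>k. mnorm (cm A k) \<le> C * R^k"
    using mat_conv_bound[of A] fu by (auto simp: fuchsian_at_infty_def)
  show ?thesis
  proof (rule bound_lemma[where a = "mnorm Bi * C" and d = "mnorm Bi * mnorm B" and R = R and p = p])
    fix m :: nat assume m1: "m \<ge> 1"
    define Rm where "Rm = (if p dvd m \<and> 1 < p then c (m div p) ** B else 0)"
    define Sm where "Sm = (\<Sum>k\<in>{1..m}. cm A k ** c (m - k))"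
    have cm: "c m = Bi ** (Rm - Sm)" using m1 unfolding c Rm_def Sm_def Bi_def B_def
      by (subst fsol.simps) simp
    have hR: "mnorm Rm \<le> mnorm B * mnorm (c (m div p))"
      unfolding Rm_def using mnorm_mult[of "c (m div p)" B] by (auto simp: mult.commute)
    have hS: "mnorm Sm \<le> C * (\<Sum>k\<in>{1..m}. R^k * mnorm (c (m - k)))"
    proof -
      have "mnorm Sm \<le> (\<Sum>k\<in>{1..m}. mnorm (cm A k ** c (m - k)))" unfolding Sm_def by (rule mnorm_sum)
      also have "\<dots> \<le> (\<Sum>k\<in>{1..m}. (C * R^k) * mnorm (c (m - k)))"
        by (intro sum_mono order.trans[OF mnorm_mult] mult_right_mono CR) auto
      finally show ?thesis by (simp add: sum_distrib_left mult_ac)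
    qed
    have "mnorm (c m) \<le> mnorm Bi * mnorm (Rm - Sm)" unfolding cm by (rule mnorm_mult)
    also have "\<dots> \<le> mnorm Bi * (mnorm B * mnorm (c (m div p)) + C * (\<Sum>k\<in>{1..m}. R^k * mnorm (c (m - k))))"
      by (intro mult_left_mono order.trans[OF mnorm_diff] add_mono hR hS) auto
    finally show "mnorm (c m) \<le> mnorm Bi * C * (\<Sum>k\<in>{1..m}. R^k * mnorm (c (m - k))) + mnorm Bi * mnorm B * mnorm (c (m div p))"
      by (simp add: algebra_simps)
  qed (use CR p in auto)
qed

lemma rinv_bound:
  assumes c0: "c 0 = mat 1" and K: "0 \<le> K" and M: "M \<ge> 1" and bd: "\<And>k. mnorm (c k) \<le> K * M^k"
  shows "\<exists>N\<ge>1. \<forall>m. mnorm (rinv c m) \<le> mnorm (rinv c 0) * N^m"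
proof (rule bound_lemma[where a = K and d = 0 and R = M and p = 2])
  fix m :: nat assume m1: "m \<ge> 1"
  have "rinv c m = - (\<Sum>k\<in>{1..m}. c k ** rinv c (m - k))" using m1 by (subst rinv.simps) simp
  hence "mnorm (rinv c m) \<le> (\<Sum>k\<in>{1..m}. mnorm (c k ** rinv c (m - k)))" using mnorm_sum by simp
  also have "\<dots> \<le> (\<Sum>k\<in>{1..m}. (K * M^k) * mnorm (rinv c (m - k)))"
    by (intro sum_mono order.trans[OF mnorm_mult] mult_right_mono bd) auto
  finally show "mnorm (rinv c m) \<le> K * (\<Sum>k\<in>{1..m}. M^k * mnorm (rinv c (m - k))) + 0 * mnorm (rinv c (m div 2))"
    by (simp add: sum_distrib_left mult_ac)
qed (use K M in auto)

lemma conv_part: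
  assumes p: "p \<ge> 2" and fu: "fuchsian_at_infty A"
    and F: "invertible F \<and> mat_at_infty F = mat 1 \<and>
            matrix_inv (mat_phi p F) ** A ** F = const_mat (mat_at_infty A)"
  shows "GL_convergent F \<and> (\<exists>K M. 0 \<le> K \<and> 1 \<le> M \<and> (\<forall>k. mnorm (cm F k) \<le> K * M^k))"
proof -
  have c: "cm F = fsol (matrix_inv (cm A 0)) (cm A) (cm A 0) p" using sol_char[OF p fu] F by blast
  obtain M where M: "M \<ge> 1" "\<And>m. mnorm (cm F m) \<le> mnorm (cm F 0) * M^m"
    using sol_bound[OF p fu c] by blast
  have convF: "convergent_mat F" by (rule bound_convergent[OF _ M(1) M(2)]) simp
  have F0: "cm F 0 = mat 1" using F by (simp add: mat_at_infty_cm)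
  define H where "H = mkm (rinv (cm F))"
  obtain N where N: "N \<ge> 1" "\<And>m. mnorm (rinv (cm F) m) \<le> mnorm (rinv (cm F) 0) * N^m"
    using rinv_bound[OF F0 _ M(1) M(2)] by auto
  have convH: "convergent_mat H"
    using bound_convergent[OF mnorm_nonneg[of "rinv (cm F) 0"] N(1), of H] N(2) by (simp add: H_def)
  have "F ** H = mat 1 \<and> H ** F = mat 1" using inv_of_I0[OF F0] by (simp add: H_def)
  hence "GL_convergent F" using convF convH unfolding GL_convergent_def by blast
  moreover have "\<exists>K M. 0 \<le> K \<and> 1 \<le> M \<and> (\<forall>k. mnorm (cm F k) \<le> K * M^k)"
    using M mnorm_nonneg[of "cm F 0"] by blast
  ultimately show ?thesis by blast
qed



definition mmero :: "(complex \<Rightarrow> complex^'n^'m) \<Rightarrow> complex set \<Rightarrow> bool" where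
  "mmero X S \<longleftrightarrow> (\<forall>i j. (\<lambda>w. X w $ i $ j) meromorphic_on S)"

lemma mmero_mult:
  assumes "mmero X S" "mmero Y S"
  shows "mmero (\<lambda>w. X w ** Y w) S"
  using assms unfolding mmero_def matrix_matrix_mult_def
  by (auto intro!: meromorphic_intros)

lemma mmero_const: "mmero (\<lambda>w. C) S"
  by (auto simp: mmero_def intro: meromorphic_on_const)

lemma mero_ifc: "f meromorphic_on S \<Longrightarrow> g meromorphic_on S \<Longrightarrow> (\<lambda>w. if P then f w else g w) meromorphic_on S"
  by (cases P) auto

lemma mero_isol: "f meromorphic_on S \<Longrightarrow> z \<in> S \<Longrightarrow> isolated_singularity_at f z"
  by (meson meromorphic_on_isolated_singularity meromorphic_on_meromorphic_at)

lemma mmero_subset: "mmero X S \<Longrightarrow> T \<subseteq> S \<Longrightarrow> mmero X T"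
  unfolding mmero_def using meromorphic_on_subset by blast

lemma mmero_compose:
  assumes "mmero X A" "f analytic_on B" "f ` B \<subseteq> A"
  shows "mmero (\<lambda>w. X (f w)) B"
  using assms unfolding mmero_def by (auto intro: meromorphic_on_compose[where g = "\<lambda>w. X w $ _ $ _"])

lemma mero_det:
  assumes "mmero X S"
  shows "(\<lambda>w. det (X w)) meromorphic_on S"
  using assms unfolding mmero_def det_def by (auto intro!: meromorphic_intros)

lemma isCont_det:
  fixes X :: "complex \<Rightarrow> complex^'n^'n"
  assumes "\<And>i j. isCont (\<lambda>w. X w $ i $ j) z"
  shows "isCont (\<lambda>w. det (X w)) z"
  unfolding det_def by (intro continuous_intros assms)

definition pinv :: "complex^'n^'n \<Rightarrow> complex^'n^'n" where
  "pinv M = (\<chi> k j. det (\<chi> i l. if l = k then (if i = j then 1 else 0) else M$i$l) / det M)"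

lemma pinv_right:
  fixes M :: "complex^'n^'n"
  assumes "det M \<noteq> 0"
  shows "M ** pinv M = mat 1"
proof -
  have "(M ** pinv M) $ i $ j = mat 1 $ i $ j" for i j
  proof -
    define b :: "complex^'n" where "b = (\<chi> i. if i = j then 1 else 0)"
    define x :: "complex^'n" where "x = (\<chi> k. pinv M $ k $ j)"
    have "x = (\<chi> k. det(\<chi> i j. if j=k then b$i else M$i$j) / det M)"
      unfolding x_def pinv_def b_def vec_eq_iff by (auto intro!: arg_cong[where f=det] simp: vec_eq_iff)
    hence "M *v x = b" using cramer[OF assms] by blast
    hence "(M *v x) $ i = b $ i" by simp
    thus ?thesis by (simp add: matrix_matrix_mult_def matrix_vector_mult_def x_def b_def mat_def)
  qed
  thus ?thesis by (simp add: vec_eq_iff)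
qed

lemma pinv_left:
  fixes M :: "complex^'n^'n"
  assumes "det M \<noteq> 0"
  shows "pinv M ** M = mat 1"
  using pinv_right[OF assms] matrix_left_right_inverse by blast

lemma mmero_pinv:
  assumes "mmero X S"
  shows "mmero (\<lambda>w. pinv (X w)) S"
proof -
  have m: "(\<lambda>w. X w $ i $ j) meromorphic_on S" for i j using assms by (simp add: mmero_def)
  have "(\<lambda>w. det (\<chi> i l. if l = k then (if i = j then 1 else 0) else X w $i$l)) meromorphic_on S" for k j
    unfolding mmero_def by (rule mero_det) (auto simp: mmero_def intro!: m mero_ifc meromorphic_on_const)
  moreover have "(\<lambda>w. det (X w)) meromorphic_on S" by (rule mero_det[OF assms])
  ultimately show ?thesis unfolding mmero_def pinv_def by (auto intro!: meromorphic_intros)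
qed

lemma mero_ident:
  assumes f: "f meromorphic_on S" and g: "g meromorphic_on S" and S: "open S" "connected S" "z0 \<in> S"
    and ev: "eventually (\<lambda>w. f w = g w) (at z0)" and z: "z \<in> S"
  shows "eventually (\<lambda>w. f w = g w) (at z)"
proof -
  define h where "h = (\<lambda>w. f w - g w)"
  have h: "h meromorphic_on S" unfolding h_def using f g by (intro meromorphic_intros)
  have nh: "remove_sings h nicely_meromorphic_on S" by (rule remove_sings_nicely_meromorphic[OF h])
  have "eventually (\<lambda>w. remove_sings h w = h w) (at z0)"
    using h S by (intro eventually_remove_sings_eq_at) (auto intro: mero_isol)
  moreover have "eventually (\<lambda>w. h w = 0) (at z0)" using ev by eventually_elim (simp add: h_def)
  ultimately have "eventually (\<lambda>w. remove_sings h w = 0) (at z0)" by eventually_elim auto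
  hence "frequently (\<lambda>w. remove_sings h w = 0) (at z0)"
    by (intro eventually_frequently) auto
  hence zero: "\<And>w. w \<in> S \<Longrightarrow> remove_sings h w = 0"
    using frequently_eq_meromorphic_imp_constant[OF _ nh S(1,2,3)] by blast
  have "eventually (\<lambda>w. remove_sings h w = h w) (at z)"
    using h S z by (intro eventually_remove_sings_eq_at) (auto intro: mero_isol)
  moreover have "eventually (\<lambda>w. w \<in> S) (at z)" using S z by (intro eventually_at_in_open') auto
  ultimately show ?thesis by eventually_elim (use zero in \<open>auto simp: h_def\<close>)
qed



lemma exp_at0: "f has_fps_expansion H \<Longrightarrow> f 0 = fps_nth H 0"
  by (auto simp: has_fps_expansion_def eval_fps_at_0 dest: eventually_nhds_x_imp_x)

lemma exp_unique: "f has_fps_expansion H \<Longrightarrow> g has_fps_expansion H \<Longrightarrow> eventually (\<lambda>u. f u = g u) (nhds 0)"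
  unfolding has_fps_expansion_def by (auto elim: eventually_elim2)

lemma poly_exp: "poly P has_fps_expansion fps_of_poly P"
  by (auto simp: has_fps_expansion_def)

lemma poly_analytic: "poly P analytic_on S"
proof -
  have "(\<lambda>z. poly P z) holomorphic_on UNIV" by (intro poly_holomorphic_on holomorphic_intros)
  hence "poly P analytic_on UNIV" by (simp add: analytic_on_open)
  thus ?thesis using analytic_on_subset by blast
qed

lemma poly_mero: "poly P meromorphic_on S"
  by (rule analytic_on_imp_meromorphic_on[OF poly_analytic])

locale msetup =
  fixes A F :: "complex fps^'n^'n" and p :: nat and r :: real and P Q :: "'n \<Rightarrow> 'n \<Rightarrow> complex poly"
  assumes p: "p \<ge> 2"
  and fu: "fuchsian_at_infty A"
  and feq: "A ** F = mat_phi p F ** const_mat (cm A 0)"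
  and F0: "cm F 0 = mat 1"
  and r: "0 < r" "r < 1"
  and rad: "\<And>i j. fps_conv_radius (ent F i j) \<ge> ereal r"
  and PQ: "\<And>i j. poly (Q i j) 0 \<noteq> 0" "\<And>i j. ent A i j = fps_of_poly (P i j) / fps_of_poly (Q i j)"
begin

definition A0 :: "complex^'n^'n" where "A0 = cm A 0"
definition af :: "complex \<Rightarrow> complex^'n^'n" where "af u = (\<chi> i j. poly (P i j) u / poly (Q i j) u)"
definition Fe :: "complex \<Rightarrow> complex^'n^'n" where "Fe u = (\<chi> i j. eval_fps (ent F i j) u)"
definition Ai :: "complex \<Rightarrow> complex^'n^'n" where "Ai u = pinv (af u)"

lemma af_exp: "(\<lambda>u. af u $ i $ j) has_fps_expansion ent A i j"
  unfolding af_def vec_lambda_beta PQ(2)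
  by (rule has_fps_expansion_divide'[OF poly_exp poly_exp]) (use PQ(1) in \<open>simp add: poly_0_coeff_0\<close>)

lemma af_mero: "mmero af S"
  unfolding mmero_def af_def vec_lambda_beta
  by (auto intro!: meromorphic_on_divide poly_mero)

lemma af0: "af 0 = A0"
  using exp_at0[OF af_exp] by (simp add: vec_eq_iff A0_def cm_def)

lemma detA0: "det A0 \<noteq> 0"
  using fu by (simp add: fuchsian_at_infty_def invertible_det_nz A0_def mat_at_infty_cm)

lemma ev_nz:
  fixes X :: "complex \<Rightarrow> complex^'n^'n"
  assumes "\<And>i j. isCont (\<lambda>w. X w $ i $ j) 0" "det (X 0) \<noteq> 0"
  shows "eventually (\<lambda>u. det (X u) \<noteq> 0) (nhds 0)"
proof -
  have "isCont (\<lambda>w. det (X w)) 0" by (rule isCont_det) (rule assms)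
  hence "eventually (\<lambda>u. det (X u) \<noteq> 0) (at 0)"
    using assms(2) by (intro tendsto_imp_eventually_ne) (auto simp: isCont_def)
  thus ?thesis using assms(2) by (simp add: eventually_nhds_conv_at)
qed

lemma det_af_ev: "eventually (\<lambda>u. det (af u) \<noteq> 0) (nhds 0)"
proof (rule ev_nz)
  show "isCont (\<lambda>w. af w $ i $ j) 0" for i j
    using has_fps_expansion_imp_continuous[OF af_exp, of UNIV] by simp
  show "det (af 0) \<noteq> 0" using af0 detA0 by simp
qed

lemma Fe_rad: "ball 0 r \<subseteq> eball 0 (fps_conv_radius (ent F i j))"
proof
  fix x assume "x \<in> ball 0 r"
  hence "ereal (dist 0 x) < ereal r" by simp
  hence "ereal (dist 0 x) < fps_conv_radius (ent F i j)" using rad[of i j] by (rule order.strict_trans2)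
  thus "x \<in> eball 0 (fps_conv_radius (ent F i j))" by simp
qed

lemma Fe_analytic: "(\<lambda>u. Fe u $ i $ j) analytic_on ball 0 r"
  unfolding Fe_def vec_lambda_beta by (rule FPS_Convergence.analytic_on_eval_fps[OF Fe_rad])

lemma Fe_exp: "(\<lambda>u. Fe u $ i $ j) has_fps_expansion ent F i j"
proof -
  have "ereal 0 < ereal r" using r by simp
  hence "ereal 0 < fps_conv_radius (ent F i j)" using rad[of i j] by (rule order.strict_trans2)
  hence "fps_conv_radius (ent F i j) > 0" by (simp add: zero_ereal_def)
  thus ?thesis unfolding Fe_def vec_lambda_beta by (rule eval_fps_has_fps_expansion)
qed

lemma Fe0: "Fe 0 = mat 1"
  using F0 by (simp add: Fe_def eval_fps_at_0 cm_def)

lemma det_Fe_ev: "eventually (\<lambda>u. det (Fe u) \<noteq> 0) (nhds 0)"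
proof (rule ev_nz)
  show "isCont (\<lambda>w. Fe w $ i $ j) 0" for i j
    using has_fps_expansion_imp_continuous[OF Fe_exp, of UNIV] by simp
  show "det (Fe 0) \<noteq> 0" using Fe0 by simp
qed

lemma feq_ev: "eventually (\<lambda>u. af u ** Fe u = Fe (u^p) ** A0) (nhds 0)"
proof -
  have e1: "(\<lambda>u. (af u ** Fe u) $ i $ j) has_fps_expansion ent (A ** F) i j" for i j
    unfolding matrix_matrix_mult_def vec_lambda_beta
    by (intro has_fps_expansion_sum has_fps_expansion_mult af_exp Fe_exp)
  have cX: "(\<lambda>u. Fe (u^p) $ i $ k) has_fps_expansion (ent F i k oo fps_X ^ p)" for i k
  proof -
    have "((\<lambda>u. Fe u $ i $ k) \<circ> (\<lambda>u. u^p)) has_fps_expansion (ent F i k oo fps_X ^ p)"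
      using p by (intro has_fps_expansion_compose Fe_exp has_fps_expansion_fps_X_power) auto
    thus ?thesis by (simp add: o_def)
  qed
  have e2: "(\<lambda>u. (Fe (u^p) ** A0) $ i $ j) has_fps_expansion ent (mat_phi p F ** const_mat (cm A 0)) i j" for i j
    unfolding matrix_matrix_mult_def vec_lambda_beta mat_phi_def mahler_phi_def const_mat_def A0_def
    by (intro has_fps_expansion_sum has_fps_expansion_cmult_right cX)
  have "eventually (\<lambda>u. (af u ** Fe u) $ i $ j = (Fe (u^p) ** A0) $ i $ j) (nhds 0)" for i j
    by (rule exp_unique[OF e1 e2[unfolded feq[symmetric]]])
  hence "eventually (\<lambda>u. \<forall>i j. (af u ** Fe u) $ i $ j = (Fe (u^p) ** A0) $ i $ j) (nhds 0)"
    by (intro eventually_all_finite) auto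
  thus ?thesis by eventually_elim (simp add: vec_eq_iff)
qed

end


context msetup begin

primrec chainF :: "nat \<Rightarrow> complex \<Rightarrow> complex^'n^'n" where
  "chainF 0 = Fe"
| "chainF (Suc k) = (\<lambda>w. Ai w ** chainF k (w^p) ** A0)"

definition U :: "nat \<Rightarrow> complex set" where "U k = {w. norm w ^ (p^k) < r}"

lemma ppos: "p^k > 0" using p by simp

lemma U_ball: "U k = ball 0 (root (p^k) r)"
proof -
  have "norm w ^ (p^k) < r \<longleftrightarrow> norm w < root (p^k) r" for w :: complex
  proof -
    have "norm w ^ (p^k) < r \<longleftrightarrow> root (p^k) (norm w ^ (p^k)) < root (p^k) r"
      using ppos[of k] by simp
    also have "root (p^k) (norm w ^ (p^k)) = norm w" using ppos[of k] by (simp add: real_root_power_cancel)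
    finally show ?thesis .
  qed
  thus ?thesis by (auto simp: U_def)
qed

lemma U_open: "open (U k)" by (simp add: U_ball)
lemma U_conn: "connected (U k)" by (simp add: U_ball)
lemma U_0: "0 \<in> U k" using r ppos[of k] by (simp add: U_ball real_root_gt_zero)

lemma U0: "U 0 = ball 0 r" by (auto simp: U_def)

lemma U_lt1: "w \<in> U k \<Longrightarrow> norm w < 1"
proof -
  assume "w \<in> U k"
  hence "norm w ^ (p^k) < 1" using r by (simp add: U_def)
  thus "norm w < 1" using ppos[of k] by (metis norm_ge_zero power_less_one_iff not_less power_one_over less_le)
qed

lemma U_mono: "k \<le> K \<Longrightarrow> U k \<subseteq> U K"
proof
  fix w assume k: "k \<le> K" and w: "w \<in> U k"
  have n1: "norm w \<le> 1" using U_lt1[OF w] by simp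
  have "p^k \<le> p^K" using k p by (intro power_increasing) auto
  hence "norm w ^ (p^K) \<le> norm w ^ (p^k)" using n1 by (rule power_decreasing[OF _ norm_ge_zero])
  thus "w \<in> U K" using w by (simp add: U_def)
qed

lemma U_pow: "w \<in> U (Suc k) \<Longrightarrow> w^p \<in> U k"
  by (simp add: U_def norm_power power_mult[symmetric] mult.commute)

lemma U_cover: "norm w < 1 \<Longrightarrow> \<exists>k. w \<in> U k"
proof -
  assume w: "norm w < 1"
  obtain k where k: "norm w ^ k < r" using real_arch_pow_inv[OF r(1) w] by blast
  have "k \<le> p^k" using p by (metis less_imp_le_nat less_exp one_less_numeral_iff order.trans power_mono semiring_norm(76) zero_le)
  hence "norm w ^ (p^k) \<le> norm w ^ k" using w by (intro power_decreasing[OF _ norm_ge_zero]) auto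
  thus ?thesis using k by (intro exI[of _ k]) (simp add: U_def)
qed

lemma chain_mero: "mmero (chainF k) (U k)"
proof (induction k)
  case 0
  show ?case unfolding mmero_def U0 chainF.simps
    by (auto intro: analytic_on_imp_meromorphic_on Fe_analytic)
next
  case (Suc k)
  have "mmero (\<lambda>w. chainF k (w^p)) (U (Suc k))"
    by (rule mmero_compose[OF Suc.IH]) (auto intro!: analytic_intros U_pow)
  moreover have "mmero Ai (U (Suc k))" unfolding Ai_def by (intro mmero_pinv af_mero)
  ultimately show ?case unfolding chainF.simps by (intro mmero_mult mmero_const)
qed

lemma chain_ev: "eventually (\<lambda>w. chainF k w = Fe w) (nhds 0)"
proof (induction k)
  case (Suc k)
  have lim: "filterlim (\<lambda>w::complex. w^p) (nhds 0) (nhds 0)"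
  proof -
    have "((\<lambda>w::complex. w^p) \<longlongrightarrow> 0^p) (nhds 0)" by (intro tendsto_intros filterlim_ident)
    moreover have "(0::complex)^p = 0" using p by (simp add: power_0_left)
    ultimately show ?thesis by simp
  qed
  have "eventually (\<lambda>w. chainF k (w^p) = Fe (w^p)) (nhds 0)"
    using eventually_compose_filterlim[OF Suc.IH lim] .
  moreover note feq_ev det_af_ev
  ultimately show ?case
  proof eventually_elim
    case (elim w)
    have "chainF (Suc k) w = Ai w ** (Fe (w^p) ** A0)" using elim(1) by (simp add: matrix_mul_assoc)
    also have "\<dots> = Ai w ** (af w ** Fe w)" using elim(2) by simp
    also have "\<dots> = (Ai w ** af w) ** Fe w" by (simp add: matrix_mul_assoc)
    also have "Ai w ** af w = mat 1" unfolding Ai_def by (rule pinv_left[OF elim(3)])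
    finally show ?case by simp
  qed
qed simp

lemma chain_ident:
  assumes kK: "k \<le> K" and z: "z \<in> U k"
  shows "eventually (\<lambda>w. chainF k w $ i $ j = chainF K w $ i $ j) (at z)"
proof (rule mero_ident[OF _ _ U_open U_conn U_0 _ z])
  show "(\<lambda>w. chainF k w $ i $ j) meromorphic_on U k" using chain_mero[of k] by (simp add: mmero_def)
  show "(\<lambda>w. chainF K w $ i $ j) meromorphic_on U k"
    using chain_mero[of K] U_mono[OF kK] by (auto simp: mmero_def intro: meromorphic_on_subset)
  have "eventually (\<lambda>w. chainF k w = chainF K w) (nhds 0)"
    using chain_ev[of k] chain_ev[of K] by eventually_elim simp
  hence "eventually (\<lambda>w. chainF k w = chainF K w) (at 0)" by (simp add: eventually_nhds_conv_at)
  thus "eventually (\<lambda>w. chainF k w $ i $ j = chainF K w $ i $ j) (at 0)" by eventually_elim simp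
qed

definition kk :: "complex \<Rightarrow> nat" where "kk w = (LEAST k. w \<in> U k)"
definition Fmf :: "'n \<Rightarrow> 'n \<Rightarrow> complex \<Rightarrow> complex" where
  "Fmf i j w = remove_sings (\<lambda>u. chainF (kk w) u $ i $ j) w"
definition Fmat :: "complex \<Rightarrow> complex^'n^'n" where "Fmat w = (\<chi> i j. Fmf i j w)"

lemma Fmf_eq:
  assumes w: "w \<in> U K"
  shows "Fmf i j w = remove_sings (\<lambda>u. chainF K u $ i $ j) w"
proof -
  have k1: "kk w \<le> K" unfolding kk_def using w by (rule Least_le)
  have k2: "w \<in> U (kk w)" unfolding kk_def using w by (rule LeastI)
  show ?thesis unfolding Fmf_def by (rule remove_sings_cong[OF chain_ident[OF k1 k2] refl])
qed

lemma Fmf_mero: "Fmf i j meromorphic_on ball 0 1"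
proof (subst meromorphic_on_meromorphic_at, intro ballI)
  fix z :: complex assume "z \<in> ball 0 1"
  then obtain K where K: "z \<in> U K" using U_cover by auto
  have m: "remove_sings (\<lambda>u. chainF K u $ i $ j) meromorphic_on U K"
    using chain_mero[of K] by (intro remove_sings_meromorphic) (simp add: mmero_def)
  have "Fmf i j meromorphic_on {z} \<longleftrightarrow> remove_sings (\<lambda>u. chainF K u $ i $ j) meromorphic_on {z}"
  proof (rule meromorphic_on_cong)
    fix z' assume "z' \<in> {z}"
    hence "eventually (\<lambda>w. w \<in> U K) (at z')" using K U_open by (intro eventually_at_in_open') auto
    thus "eventually (\<lambda>w. Fmf i j w = remove_sings (\<lambda>u. chainF K u $ i $ j) w) (at z')"
      by eventually_elim (rule Fmf_eq)
  qed simp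
  thus "Fmf i j meromorphic_on {z}" using m K by (auto intro: meromorphic_on_subset)
qed

lemma Fmf_near0: "w \<in> ball 0 r \<Longrightarrow> Fmf i j w = eval_fps (ent F i j) w"
proof -
  assume w: "w \<in> ball 0 r"
  hence "Fmf i j w = remove_sings (\<lambda>u. chainF 0 u $ i $ j) w" using Fmf_eq[of w 0] by (simp add: U0)
  also have "\<dots> = remove_sings (\<lambda>u. Fe u $ i $ j) w" by simp
  also have "\<dots> = Fe w $ i $ j"
  proof (rule remove_sings_at_analytic)
    show "(\<lambda>u. Fe u $ i $ j) analytic_on {w}" using Fe_analytic[of i j] w analytic_on_subset by blast
  qed
  finally show ?thesis by (simp add: Fe_def)
qed

lemma result: "GL_meromorphic F"
proof -
  define Fm :: "(complex \<Rightarrow> complex)^'n^'n" where "Fm = (\<chi> i j. Fmf i j)"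
  define Gm :: "(complex \<Rightarrow> complex)^'n^'n" where "Gm = (\<chi> i j. (\<lambda>w. pinv (Fmat w) $ i $ j))"
  have mF: "mmero Fmat (ball 0 1)" by (simp add: mmero_def Fmat_def Fmf_mero)
  have ev0: "eventually (\<lambda>w. w \<in> ball 0 r) (at 0)" using r by (intro eventually_at_in_open') auto
  have "meromorphic_ext (ent F i j) (ent Fm i j)" for i j
    unfolding meromorphic_ext_def Fm_def vec_lambda_beta
    using Fmf_mero ev0 by (auto elim!: eventually_mono simp: Fmf_near0)
  moreover have "ent Gm i j meromorphic_on ball 0 1" for i j
    using mmero_pinv[OF mF] by (simp add: Gm_def mmero_def)
  moreover have "eventually (\<lambda>w. (\<chi> i j. ent Fm i j w) ** (\<chi> i j. ent Gm i j w) = mat 1) (at 0)"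
  proof -
    have "eventually (\<lambda>u. det (Fe u) \<noteq> 0) (at 0)" using det_Fe_ev by (simp add: eventually_nhds_conv_at)
    thus ?thesis using ev0
    proof eventually_elim
      case (elim w)
      have "Fmat w = Fe w" using elim(2) by (simp add: Fmat_def Fe_def Fmf_near0 vec_eq_iff)
      hence "det (Fmat w) \<noteq> 0" using elim(1) by simp
      hence "Fmat w ** pinv (Fmat w) = mat 1" by (rule pinv_right)
      moreover have "(\<chi> i j. ent Fm i j w) = Fmat w" by (simp add: Fm_def Fmat_def)
      moreover have "(\<chi> i j. ent Gm i j w) = pinv (Fmat w)" by (simp add: Gm_def vec_eq_iff)
      ultimately show ?case by simp
    qed
  qed
  ultimately show ?thesis unfolding GL_meromorphic_def by blast
qed

end


lemma feq_from:
  assumes p: "p \<ge> 2" and H: "invertible F \<and> mat_at_infty F = mat 1 \<and>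
            matrix_inv (mat_phi p F) ** A ** F = const_mat (mat_at_infty A)"
  shows "A ** F = mat_phi p F ** const_mat (cm A 0)"
proof -
  define X where "X = mat_phi p F"
  have "cm F 0 = mat 1" using H by (simp add: mat_at_infty_cm)
  hence X0: "cm X 0 = mat 1" using p by (simp add: cm_phi X_def)
  hence inv: "X ** matrix_inv X = mat 1" using inv_props invertible_I0 by blast
  have h: "matrix_inv X ** A ** F = const_mat (cm A 0)" using H by (simp add: X_def mat_at_infty_cm)
  have "X ** (matrix_inv X ** A ** F) = (X ** matrix_inv X) ** A ** F" by (simp add: matrix_mul_assoc)
  also have "\<dots> = A ** F" using inv by simp
  finally show ?thesis using h by (simp add: X_def)
qed

theorem mainTheorem3:
  fixes A :: "complex fps ^'n^'n" and p :: nat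
  assumes "p \<ge> 2"
    and "fuchsian_at_infty A"
  shows "(\<exists>!F :: complex fps ^'n^'n. invertible F \<and> mat_at_infty F = mat 1 \<and>
            matrix_inv (mat_phi p F) ** A ** F = const_mat (mat_at_infty A))
       \<and> (\<forall>F :: complex fps ^'n^'n. invertible F \<and> mat_at_infty F = mat 1 \<and>
            matrix_inv (mat_phi p F) ** A ** F = const_mat (mat_at_infty A) \<longrightarrow>
            GL_convergent F \<and> (rational_mat A \<longrightarrow> GL_meromorphic F))"
proof (intro conjI allI impI)
  show "\<exists>!F :: complex fps ^'n^'n. invertible F \<and> mat_at_infty F = mat 1 \<and>
            matrix_inv (mat_phi p F) ** A ** F = const_mat (mat_at_infty A)"
    by (rule formal_part[OF assms])
next
  fix F :: "complex fps ^'n^'n"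
  assume H: "invertible F \<and> mat_at_infty F = mat 1 \<and>
            matrix_inv (mat_phi p F) ** A ** F = const_mat (mat_at_infty A)"
  show "GL_convergent F" using conv_part[OF assms H] by blast
  assume rat: "rational_mat A"
  obtain K M where KM: "0 \<le> K" "1 \<le> M" "\<And>k. mnorm (cm F k) \<le> K * M^k"
    using conv_part[OF assms H] by blast
  define r where "r = 1 / (2 * M)"
  have r: "0 < r" "r < 1" using KM(2) by (auto simp: r_def field_simps)
  have rad: "\<And>i j. fps_conv_radius (ent F i j) \<ge> ereal r"
    unfolding r_def by (rule bound_conv[OF KM(1) KM(2) KM(3)])
  have "\<forall>i j. \<exists>PQ :: complex poly \<times> complex poly. poly (snd PQ) 0 \<noteq> 0 \<and>
          ent A i j = fps_of_poly (fst PQ) / fps_of_poly (snd PQ)"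
    using rat by (auto simp: rational_mat_def rational_fps_def)
  then obtain PQ where PQ: "\<And>i j. poly (snd (PQ i j)) 0 \<noteq> 0 \<and>
          ent A i j = fps_of_poly (fst (PQ i j)) / fps_of_poly (snd (PQ i j))"
    by metis
  interpret msetup A F p r "\<lambda>i j. fst (PQ i j)" "\<lambda>i j. snd (PQ i j)"
  proof
    show "A ** F = mat_phi p F ** const_mat (cm A 0)" by (rule feq_from[OF assms(1) H])
    show "cm F 0 = mat 1" using H by (simp add: mat_at_infty_cm)
  qed (use assms r rad PQ in auto)
  show "GL_meromorphic F" by (rule result)
qed


end
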